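(* Let $\mathcal X$ be a set of $n\ge3$ items and let $\mathcal C$ be the collection of all subsets of $\mathcal X$ of even size at least 2, so that $d=\sum_{C\in\mathcal C}|C|=n2^{n-2}$. Then the comparison incidence graph $G_{\mathcal C}$ has a cycle decomposition $\sigma$ with $\mu(\sigma)\le5\log_2(n)$ and $\alpha(\sigma)\le5\log_2(n)$.
   Context: $G_{\mathcal C}$ is the bipartite graph with one node per item of $\mathcal X$ and one node per set $C\in\mathcal C$, with an edge between $x$ and $C$ iff $x\in C$. A cycle decomposition $\sigma$ is a partition of the edge set of $G_{\mathcal C}$ into edge-disjoint simple cycles $\sigma_1,\dots,\sigma_{|\sigma|}$; with $|\sigma_i|$ the number of edges of $\sigma_i$, $\mu(\sigma)=d/|\sigma|$ and $\alpha(\sigma)=\frac1d\sum_i|\sigma_i|^2$. *)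

theory Defs
  imports Complex_Main
begin

text \<open>Comparison incidence graph: vertices are items (Inl x) and sets (Inr C);
undirected edges are two-element vertex sets {Inl x, Inr C} with x in C.\<close>
definition comp_graph_edges :: "'a set set \<Rightarrow> ('a + 'a set) set set" where
  "comp_graph_edges \<C> = {{Inl x, Inr C} | x C. C \<in> \<C> \<and> x \<in> C}"

definition cycle_edges :: "'v list \<Rightarrow> 'v set set" where
  "cycle_edges vs = {{vs ! i, vs ! (Suc i mod length vs)} | i. i < length vs}"

definition simple_cycle :: "'v set set \<Rightarrow> 'v list \<Rightarrow> bool" where
  "simple_cycle E vs \<longleftrightarrow> length vs \<ge> 3 \<and> distinct vs \<and> cycle_edges vs \<subseteq> E"

definition cycle_decomposition :: "'v set set \<Rightarrow> 'v list list \<Rightarrow> bool" where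
  "cycle_decomposition E \<sigma> \<longleftrightarrow>
     (\<forall>c\<in>set \<sigma>. simple_cycle E c) \<and>
     (\<Union>c\<in>set \<sigma>. cycle_edges c) = E \<and>
     (\<forall>i<length \<sigma>. \<forall>j<length \<sigma>. i \<noteq> j \<longrightarrow> cycle_edges (\<sigma> ! i) \<inter> cycle_edges (\<sigma> ! j) = {})"

definition total_size :: "'a set set \<Rightarrow> nat" where
  "total_size \<C> = (\<Sum>C\<in>\<C>. card C)"

definition mu_dec :: "nat \<Rightarrow> 'v list list \<Rightarrow> real" where
  "mu_dec d \<sigma> = real d / real (length \<sigma>)"

definition alpha_dec :: "nat \<Rightarrow> 'v list list \<Rightarrow> real" where
  "alpha_dec d \<sigma> = (1 / real d) * (\<Sum>i<length \<sigma>. real (card (cycle_edges (\<sigma> ! i))) ^ 2)"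

end

theory Submission
  imports Defs
begin

definition decS :: "'v set set \<Rightarrow> 'v list set \<Rightarrow> bool" where
  "decS E S \<longleftrightarrow> finite S \<and> (\<forall>c\<in>S. 3 \<le> length c \<and> distinct c \<and> length c \<le> 6) \<and>
     (\<forall>c1\<in>S. \<forall>c2\<in>S. c1 \<noteq> c2 \<longrightarrow> cycle_edges c1 \<inter> cycle_edges c2 = {}) \<and>
     (\<Union>c\<in>S. cycle_edges c) = E"

lemma cycle_edges_img: "cycle_edges vs = (\<lambda>i. {vs ! i, vs ! (Suc i mod length vs)}) ` {..<length vs}"
  unfolding cycle_edges_def by auto

lemma cycle_edges_nonempty: "vs \<noteq> [] \<Longrightarrow> cycle_edges vs \<noteq> {}"
  unfolding cycle_edges_img by auto

lemma card_cycle_edges: "card (cycle_edges vs) \<le> length vs"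
  unfolding cycle_edges_img by (metis card_image_le card_lessThan finite_lessThan)

lemma finite_cycle_edges: "finite (cycle_edges vs)"
  unfolding cycle_edges_img by auto

lemma set_sub_cycle_edges: "set vs \<subseteq> \<Union>(cycle_edges vs)"
proof
  fix v assume "v \<in> set vs"
  then obtain i where "i < length vs" "vs ! i = v" by (auto simp: in_set_conv_nth)
  then show "v \<in> \<Union>(cycle_edges vs)" unfolding cycle_edges_def by blast
qed

lemma cycle_edges_map: "cycle_edges (map f vs) = (`) f ` cycle_edges vs"
proof (cases "vs = []")
  case True then show ?thesis by (simp add: cycle_edges_def)
next
  case False
  then have "\<And>i. Suc i mod length vs < length vs" by simp
  then show ?thesis unfolding cycle_edges_img by (auto simp: image_image)
qed

lemma decS_Un:
  assumes "decS E1 S1" "decS E2 S2" "E1 \<inter> E2 = {}"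
  shows "decS (E1 \<union> E2) (S1 \<union> S2)"
proof -
  have ne: "\<And>c. c \<in> S1 \<union> S2 \<Longrightarrow> cycle_edges c \<noteq> {}"
    using assms(1,2) unfolding decS_def by (metis Un_iff cycle_edges_nonempty list.size(3) not_numeral_le_zero)
  have s1: "\<And>c. c \<in> S1 \<Longrightarrow> cycle_edges c \<subseteq> E1" using assms(1) unfolding decS_def by blast
  have s2: "\<And>c. c \<in> S2 \<Longrightarrow> cycle_edges c \<subseteq> E2" using assms(2) unfolding decS_def by blast
  have "\<forall>c1\<in>S1 \<union> S2. \<forall>c2\<in>S1 \<union> S2. c1 \<noteq> c2 \<longrightarrow> cycle_edges c1 \<inter> cycle_edges c2 = {}"
  proof (intro ballI impI)
    fix c1 c2 assume c: "c1 \<in> S1 \<union> S2" "c2 \<in> S1 \<union> S2" "c1 \<noteq> c2"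
    show "cycle_edges c1 \<inter> cycle_edges c2 = {}"
    proof (cases "c1 \<in> S1 \<and> c2 \<in> S1")
      case True then show ?thesis using assms(1) c unfolding decS_def by blast
    next
      case f1: False
      show ?thesis
      proof (cases "c1 \<in> S2 \<and> c2 \<in> S2")
        case True then show ?thesis using assms(2) c unfolding decS_def by blast
      next
        case False
        then have "(c1 \<in> S1 \<and> c2 \<in> S2) \<or> (c1 \<in> S2 \<and> c2 \<in> S1)" using c f1 by blast
        then show ?thesis using s1 s2 assms(3) by blast
      qed
    qed
  qed
  moreover have "finite (S1 \<union> S2)" using assms(1,2) unfolding decS_def by simp
  moreover have "\<forall>c\<in>S1 \<union> S2. 3 \<le> length c \<and> distinct c \<and> length c \<le> 6"
    using assms(1,2) unfolding decS_def by (meson Un_iff)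
  moreover have "(\<Union>c\<in>S1 \<union> S2. cycle_edges c) = E1 \<union> E2"
    using assms(1,2) unfolding decS_def by (simp only: UN_Un)
  ultimately show ?thesis unfolding decS_def by (intro conjI)
qed

lemma decS_image:
  assumes "decS E S" "inj_on f (\<Union>E)"
  shows "decS ((`) f ` E) (map f ` S)"
proof -
  have sub: "\<And>c. c \<in> S \<Longrightarrow> cycle_edges c \<subseteq> E" using assms(1) unfolding decS_def by blast
  have vs: "\<And>c. c \<in> S \<Longrightarrow> set c \<subseteq> \<Union>E" 
  proof -
    fix c assume "c \<in> S"
    then have "\<Union>(cycle_edges c) \<subseteq> \<Union>E" using sub by (meson Union_mono)
    then show "set c \<subseteq> \<Union>E" using set_sub_cycle_edges[of c] by (rule order_trans[rotated])
  qed
  have d: "\<forall>c\<in>map f ` S. 3 \<le> length c \<and> distinct c \<and> length c \<le> 6"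
  proof
    fix c' assume "c' \<in> map f ` S"
    then obtain c where c: "c \<in> S" "c' = map f c" by auto
    have "inj_on f (set c)" using vs[OF c(1)] assms(2) inj_on_subset by blast
    then show "3 \<le> length c' \<and> distinct c' \<and> length c' \<le> 6"
      using assms(1) c unfolding decS_def by (auto simp: distinct_map)
  qed
  have dj: "\<forall>c1\<in>map f ` S. \<forall>c2\<in>map f ` S. c1 \<noteq> c2 \<longrightarrow> cycle_edges c1 \<inter> cycle_edges c2 = {}"
  proof (intro ballI impI)
    fix c1' c2' assume a: "c1' \<in> map f ` S" "c2' \<in> map f ` S" "c1' \<noteq> c2'"
    then obtain c1 c2 where c: "c1 \<in> S" "c2 \<in> S" "c1' = map f c1" "c2' = map f c2" by auto
    with a have ne: "c1 \<noteq> c2" by auto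
    then have dis: "cycle_edges c1 \<inter> cycle_edges c2 = {}" using assms(1) c unfolding decS_def by blast
    show "cycle_edges c1' \<inter> cycle_edges c2' = {}"
    proof (rule ccontr)
      assume "cycle_edges c1' \<inter> cycle_edges c2' \<noteq> {}"
      then obtain e1 e2 where e: "e1 \<in> cycle_edges c1" "e2 \<in> cycle_edges c2" "f ` e1 = f ` e2"
        unfolding c cycle_edges_map by auto
      have "e1 \<subseteq> \<Union>E" "e2 \<subseteq> \<Union>E" using e sub c by auto
      then have "e1 = e2" using e(3) assms(2) by (simp add: inj_on_image_eq_iff)
      then show False using dis e by blast
    qed
  qed
  have "(\<Union>c\<in>map f ` S. cycle_edges c) = (`) f ` E"
    using assms(1) unfolding decS_def by (auto simp: cycle_edges_map)
  moreover have "finite (map f ` S)" using assms(1) unfolding decS_def by simp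
  ultimately show ?thesis using d dj unfolding decS_def by (intro conjI)
qed

lemma decS_list:
  assumes "decS E S"
  shows "\<exists>\<sigma>. cycle_decomposition E \<sigma> \<and> (\<forall>c\<in>set \<sigma>. card (cycle_edges c) \<le> 6)"
proof -
  have fS: "finite S" using assms unfolding decS_def by blast
  obtain \<sigma> where s: "set \<sigma> = S" "distinct \<sigma>" using finite_distinct_list[OF fS] by blast
  have P: "\<forall>c\<in>S. 3 \<le> length c \<and> distinct c \<and> length c \<le> 6" using assms unfolding decS_def by blast
  have D: "\<forall>c1\<in>S. \<forall>c2\<in>S. c1 \<noteq> c2 \<longrightarrow> cycle_edges c1 \<inter> cycle_edges c2 = {}"
    using assms unfolding decS_def by blast
  have U: "(\<Union>c\<in>S. cycle_edges c) = E" using assms unfolding decS_def by blast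
  have "\<forall>c\<in>set \<sigma>. simple_cycle E c"
  proof
    fix c assume c: "c \<in> set \<sigma>"
    then have "cycle_edges c \<subseteq> E" using U s(1) by blast
    then show "simple_cycle E c" using P c s(1) unfolding simple_cycle_def by simp
  qed
  moreover have "(\<Union>c\<in>set \<sigma>. cycle_edges c) = E" using U s(1) by simp
  moreover have "\<forall>i<length \<sigma>. \<forall>j<length \<sigma>. i \<noteq> j \<longrightarrow> cycle_edges (\<sigma> ! i) \<inter> cycle_edges (\<sigma> ! j) = {}"
  proof (intro allI impI)
    fix i j assume ij: "i < length \<sigma>" "j < length \<sigma>" "i \<noteq> j"
    then have "\<sigma> ! i \<noteq> \<sigma> ! j" using s(2) by (simp add: nth_eq_iff_index_eq)
    moreover have "\<sigma> ! i \<in> S" "\<sigma> ! j \<in> S" using ij s(1) nth_mem by blast+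
    ultimately show "cycle_edges (\<sigma> ! i) \<inter> cycle_edges (\<sigma> ! j) = {}" using D by blast
  qed
  ultimately have "cycle_decomposition E \<sigma>" unfolding cycle_decomposition_def by blast
  moreover have "\<forall>c\<in>set \<sigma>. card (cycle_edges c) \<le> 6"
  proof
    fix c assume "c \<in> set \<sigma>"
    then have "length c \<le> 6" using P s(1) by blast
    then show "card (cycle_edges c) \<le> 6" using card_cycle_edges[of c] by linarith
  qed
  ultimately show ?thesis by blast
qed

definition evens :: "'a set \<Rightarrow> 'a set set" where
  "evens X = {C. C \<subseteq> X \<and> even (card C) \<and> 2 \<le> card C}"

definition Fz :: "'a set \<Rightarrow> 'a \<Rightarrow> 'a set set" where
  "Fz X z = {C \<in> evens X. z \<in> C}"

definition psi :: "'a \<Rightarrow> 'a \<Rightarrow> 'a + 'a set \<Rightarrow> 'a + 'a set" where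
  "psi w z v = (case v of Inl x \<Rightarrow> Inl x | Inr T \<Rightarrow> Inr (T \<union> {w, z}))"

definition EV :: "'a set \<Rightarrow> 'a set set" where
  "EV Z = {T. T \<subseteq> Z \<and> even (card T)}"

definition Pw :: "'a \<Rightarrow> 'a \<Rightarrow> 'a set \<Rightarrow> ('a + 'a set) set set" where
  "Pw w z Z = (\<lambda>T. {Inl w, Inr (T \<union> {w,z})}) ` EV Z \<union> (\<lambda>T. {Inl z, Inr (T \<union> {w,z})}) ` EV Z"

lemma cge_Un: "comp_graph_edges (A \<union> B) = comp_graph_edges A \<union> comp_graph_edges B"
  unfolding comp_graph_edges_def by blast

lemma edge_eq: "({Inl x, Inr C} :: ('a + 'a set) set) = {Inl y, Inr D} \<longleftrightarrow> x = y \<and> C = D"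
  by (auto simp: doubleton_eq_iff)

lemma cge_disj: "A \<inter> B = {} \<Longrightarrow> comp_graph_edges A \<inter> comp_graph_edges B = {}"
  unfolding comp_graph_edges_def by (auto simp: edge_eq)

lemma evens_split: "evens X = evens (X - {z}) \<union> Fz X z" "evens (X - {z}) \<inter> Fz X z = {}"
  unfolding evens_def Fz_def by auto

lemma Fz_split:
  assumes "finite X" "w \<noteq> z" "w \<in> X" "z \<in> X"
  shows "Fz X z = Fz (X - {w}) z \<union> (\<lambda>T. T \<union> {w,z}) ` EV (X - {w,z})"
    "Fz (X - {w}) z \<inter> (\<lambda>T. T \<union> {w,z}) ` EV (X - {w,z}) = {}"
proof -
  show "Fz (X - {w}) z \<inter> (\<lambda>T. T \<union> {w,z}) ` EV (X - {w,z}) = {}"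
    unfolding Fz_def evens_def by auto
  have "C \<in> (\<lambda>T. T \<union> {w,z}) ` EV (X - {w,z})" if "C \<in> Fz X z" "w \<in> C" for C
  proof -
    have C: "C \<subseteq> X" "even (card C)" "z \<in> C" using that unfolding Fz_def evens_def by auto
    have fC: "finite C" using C(1) assms(1) finite_subset by blast
    let ?T = "C - {w,z}"
    have sub: "{w,z} \<subseteq> C" using C(3) that(2) by simp
    have c2: "card {w,z} = 2" using assms(2) by simp
    have "card ?T = card C - card {w,z}" using card_Diff_subset[OF _ sub] by simp
    moreover have "card {w,z} \<le> card C" using card_mono[OF fC sub] .
    ultimately have "card C = card ?T + 2" using c2 by linarith
    then have "even (card ?T)" using C(2) by simp
    moreover have "C = ?T \<union> {w,z}" using C(3) that(2) by auto
    ultimately show ?thesis unfolding EV_def using C(1) by blast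
  qed
  moreover have "T \<union> {w,z} \<in> Fz X z" if "T \<in> EV (X - {w,z})" for T
  proof -
    have T: "T \<subseteq> X - {w,z}" "even (card T)" using that unfolding EV_def by auto
    have fT: "finite T" using T(1) assms(1) finite_subset by blast
    have "card (T \<union> {w,z}) = card T + 2" 
    proof -
      have "w \<notin> T" "z \<notin> T" using T(1) by auto
      then show ?thesis using fT assms(2) by simp
    qed
    then show ?thesis unfolding Fz_def evens_def using T assms by auto
  qed
  ultimately show "Fz X z = Fz (X - {w}) z \<union> (\<lambda>T. T \<union> {w,z}) ` EV (X - {w,z})"
    unfolding Fz_def evens_def by blast
qed

lemma psi_edge: "(`) (psi w z) {Inl x, Inr T} = {Inl x, Inr (T \<union> {w,z})}"
  by (simp add: psi_def)

lemma cge_mem: "C \<in> \<C> \<Longrightarrow> x \<in> C \<Longrightarrow> {Inl x, Inr C} \<in> comp_graph_edges \<C>"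
  unfolding comp_graph_edges_def by blast

lemma cge_elim: "e \<in> comp_graph_edges \<C> \<Longrightarrow> \<exists>x C. C \<in> \<C> \<and> x \<in> C \<and> e = {Inl x, Inr C}"
  unfolding comp_graph_edges_def by blast

lemma cge_W:
  assumes "finite Z" "w \<noteq> z" "w \<notin> Z" "z \<notin> Z"
  shows "comp_graph_edges ((\<lambda>T. T \<union> {w,z}) ` EV Z) = (`) (psi w z) ` comp_graph_edges (evens Z) \<union> Pw w z Z"
    "(`) (psi w z) ` comp_graph_edges (evens Z) \<inter> Pw w z Z = {}"
proof -
  show "(`) (psi w z) ` comp_graph_edges (evens Z) \<inter> Pw w z Z = {}"
  proof -
    have 1: "\<forall>e\<in>(`) (psi w z) ` comp_graph_edges (evens Z). \<exists>x\<in>Z. Inl x \<in> e"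
      unfolding comp_graph_edges_def evens_def by (auto simp: psi_def)
    have 2: "\<forall>e\<in>Pw w z Z. \<forall>y. Inl y \<in> e \<longrightarrow> y = w \<or> y = z"
      unfolding Pw_def by auto
    show ?thesis using 1 2 assms(3,4) by blast
  qed
  have A: "e \<in> (`) (psi w z) ` comp_graph_edges (evens Z) \<union> Pw w z Z"
    if e_in: "e \<in> comp_graph_edges ((\<lambda>T. T \<union> {w,z}) ` EV Z)" for e
  proof -
    obtain x C where xC: "C \<in> (\<lambda>T. T \<union> {w,z}) ` EV Z" "x \<in> C" "e = {Inl x, Inr C}"
      using cge_elim[OF e_in] by blast
    then obtain T where T: "T \<in> EV Z" "C = T \<union> {w,z}" by blast
    have xT: "T \<in> EV Z" "x \<in> T \<union> {w,z}" "e = {Inl x, Inr (T \<union> {w,z})}"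
      using xC T by auto
    show ?thesis
    proof (cases "x \<in> T")
      case True
      have fT: "finite T" using xT(1) assms(1) unfolding EV_def using finite_subset by blast
      then have "card T \<noteq> 0" using True by auto
      moreover have "even (card T)" using xT(1) unfolding EV_def by simp
      ultimately have "2 \<le> card T" by presburger
      then have "T \<in> evens Z" using xT(1) unfolding EV_def evens_def by simp
      then have "{Inl x, Inr T} \<in> comp_graph_edges (evens Z)" using True by (rule cge_mem)
      moreover have "e = (`) (psi w z) {Inl x, Inr T}" using xT(3) by (simp only: psi_edge)
      ultimately show ?thesis by blast
    next
      case False
      then have "x = w \<or> x = z" using xT(2) by auto
      then show ?thesis
      proof
        assume "x = w" then have "e \<in> Pw w z Z" using xT unfolding Pw_def by blast
        then show ?thesis by blast
      next
        assume "x = z" then have "e \<in> Pw w z Z" using xT unfolding Pw_def by blast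
        then show ?thesis by blast
      qed
    qed
  qed
  have B: "e \<in> comp_graph_edges ((\<lambda>T. T \<union> {w,z}) ` EV Z)"
    if e_in: "e \<in> (`) (psi w z) ` comp_graph_edges (evens Z) \<union> Pw w z Z" for e
  proof -
    consider (a) "e \<in> (`) (psi w z) ` comp_graph_edges (evens Z)" | (b) "e \<in> Pw w z Z" using e_in by blast
    then show ?thesis
    proof cases
      case a
      then obtain e0 where e0: "e0 \<in> comp_graph_edges (evens Z)" "e = (`) (psi w z) e0" by blast
      then obtain x T where xT0: "T \<in> evens Z" "x \<in> T" "e0 = {Inl x, Inr T}"
        using cge_elim by blast
      then have "e = {Inl x, Inr (T \<union> {w,z})}" using e0(2) by (simp only: psi_edge)
      then obtain x T where "T \<in> evens Z" "x \<in> T" "e = {Inl x, Inr (T \<union> {w,z})}" using xT0 by blast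
      moreover have "T \<in> EV Z" using \<open>T \<in> evens Z\<close> unfolding evens_def EV_def by simp
      moreover have "T \<union> {w,z} \<in> (\<lambda>T. T \<union> {w,z}) ` EV Z" using \<open>T \<in> EV Z\<close> by (rule imageI)
      moreover have "x \<in> T \<union> {w,z}" using \<open>x \<in> T\<close> by simp
      ultimately show ?thesis using cge_mem by metis
    next
      case b
      then obtain x T where "T \<in> EV Z" "x = w \<or> x = z" "e = {Inl x, Inr (T \<union> {w,z})}"
        unfolding Pw_def by blast
      moreover have "T \<union> {w,z} \<in> (\<lambda>T. T \<union> {w,z}) ` EV Z" using \<open>T \<in> EV Z\<close> by (rule imageI)
      moreover have "x \<in> T \<union> {w,z}" using \<open>x = w \<or> x = z\<close> by auto
      ultimately show ?thesis using cge_mem by metis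
    qed
  qed
  from A B show "comp_graph_edges ((\<lambda>T. T \<union> {w,z}) ` EV Z) = (`) (psi w z) ` comp_graph_edges (evens Z) \<union> Pw w z Z"
    by (intro equalityI subsetI) auto
qed

lemma psi_inj:
  assumes "w \<notin> Z" "z \<notin> Z"
  shows "inj_on (psi w z) (\<Union>(comp_graph_edges (evens Z)))"
proof (rule inj_onI)
  fix u v assume u: "u \<in> \<Union>(comp_graph_edges (evens Z))" and v: "v \<in> \<Union>(comp_graph_edges (evens Z))"
    and eq: "psi w z u = psi w z v"
  have vt: "\<And>y. y \<in> \<Union>(comp_graph_edges (evens Z)) \<Longrightarrow> (\<exists>x. y = Inl x) \<or> (\<exists>T. y = Inr T \<and> T \<subseteq> Z)"
    unfolding comp_graph_edges_def evens_def by auto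
  show "u = v"
    using vt[OF u] vt[OF v]
  proof (elim disjE exE conjE)
    fix x y assume "u = Inl x" "v = Inl y" then show ?thesis using eq by (simp add: psi_def)
  next
    fix x T assume "u = Inl x" "v = Inr T" then show ?thesis using eq by (simp add: psi_def)
  next
    fix x T assume "u = Inr T" "v = Inl x" then show ?thesis using eq by (simp add: psi_def)
  next
    fix T1 T2 assume a: "u = Inr T1" "T1 \<subseteq> Z" "v = Inr T2" "T2 \<subseteq> Z"
    then have "T1 \<union> {w,z} = T2 \<union> {w,z}" using eq by (simp add: psi_def)
    then have "T1 = T2" using a(2,4) assms by blast
    then show ?thesis using a by simp
  qed
qed

definition tog :: "'a \<Rightarrow> 'a \<Rightarrow> 'a set \<Rightarrow> 'a set" where
  "tog a b T = (T - {a,b}) \<union> ({a,b} - T)"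

lemma tog_tog: "tog a b (tog a b T) = T" unfolding tog_def by auto
lemma tog_sub: "T \<subseteq> Z \<Longrightarrow> a \<in> Z \<Longrightarrow> b \<in> Z \<Longrightarrow> tog a b T \<subseteq> Z" unfolding tog_def by auto
lemma tog_a: "a \<in> tog a b T \<longleftrightarrow> a \<notin> T" unfolding tog_def by auto

lemma tog_even:
  assumes "finite T" "a \<noteq> b" "even (card T)"
  shows "even (card (tog a b T))"
proof (cases "a \<in> T")
  case True
  show ?thesis
  proof (cases "b \<in> T")
    case True
    have "tog a b T = T - {a,b}" unfolding tog_def using \<open>a \<in> T\<close> True by auto
    moreover have "card (T - {a,b}) = card T - 2" using \<open>a \<in> T\<close> True assms(1,2)
      by (simp add: card_Diff_subset)
    moreover have "card T \<ge> 2" using \<open>a \<in> T\<close> True assms(1,2)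
      by (metis card_2_iff card_mono empty_subsetI insert_subset)
    ultimately show ?thesis using assms(3) by simp
  next
    case False
    have "tog a b T = insert b (T - {a})" unfolding tog_def using \<open>a \<in> T\<close> False by auto
    moreover have "card (insert b (T - {a})) = card T" using \<open>a \<in> T\<close> False assms(1)
      by (simp add: card_Diff_singleton) (metis One_nat_def Suc_pred card_gt_0_iff empty_iff)
    ultimately show ?thesis using assms(3) by simp
  qed
next
  case False
  show ?thesis
  proof (cases "b \<in> T")
    case True
    have "tog a b T = insert a (T - {b})" unfolding tog_def using \<open>a \<notin> T\<close> True by auto
    moreover have "card (insert a (T - {b})) = card T" using \<open>a \<notin> T\<close> True assms(1)
      by (simp add: card_Diff_singleton) (metis One_nat_def Suc_pred card_gt_0_iff empty_iff)
    ultimately show ?thesis using assms(3) by simp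
  next
    case False
    have "tog a b T = insert a (insert b T)" unfolding tog_def using \<open>a \<notin> T\<close> False by auto
    moreover have "card (insert a (insert b T)) = card T + 2" using \<open>a \<notin> T\<close> False assms(1,2) by simp
    ultimately show ?thesis using assms(3) by simp
  qed
qed

lemma ce4: "cycle_edges [p, q, r, s] = {{p,q},{q,r},{r,s},{s,p}}"
proof -
  have "{..<length [p,q,r,s]} = {0,1,2,3::nat}" by auto
  then show ?thesis unfolding cycle_edges_img by simp
qed

lemma ce4io: "cycle_edges [Inl w, Inr A, Inl z, Inr B] = {{Inl w, Inr A}, {Inl z, Inr A}, {Inl z, Inr B}, {Inl w, Inr B}}"
  unfolding ce4 by (simp add: insert_commute)

lemma Pw_memw: "T \<in> EV Z \<Longrightarrow> {Inl w, Inr (T \<union> {w,z})} \<in> Pw w z Z"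
  unfolding Pw_def by (rule UnI1, rule imageI)
lemma Pw_memz: "T \<in> EV Z \<Longrightarrow> {Inl z, Inr (T \<union> {w,z})} \<in> Pw w z Z"
  unfolding Pw_def by (rule UnI2, rule imageI)

lemma ce4io_form: "e \<in> cycle_edges [Inl w, Inr A, Inl z, Inr B] \<Longrightarrow> (\<exists>y. e = {Inl y, Inr A}) \<or> (\<exists>y. e = {Inl y, Inr B})"
  unfolding ce4io insert_iff empty_iff by (elim disjE) (rule disjI1 disjI2, rule exI, rule refl | simp)+

lemma Pw_dec:
  assumes fZ: "finite Z" and wz: "w \<noteq> z" "w \<notin> Z" "z \<notin> Z" and ab: "a \<in> Z" "b \<in> Z" "a \<noteq> b"
  shows "\<exists>S. decS (Pw w z Z) S"
proof -
  define cyc where "cyc T = [Inl w, Inr (T \<union> {w,z}), Inl z, Inr (tog a b T \<union> {w,z})]" for T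
  define I where "I = {T \<in> EV Z. a \<notin> T}"
  have finEV: "finite (EV Z)" by (rule finite_subset[of _ "Pow Z"]) (auto simp: fZ EV_def)
  have EVI: "T \<in> EV Z \<Longrightarrow> tog a b T \<in> EV Z" for T
  proof -
    assume "T \<in> EV Z"
    then have T: "T \<subseteq> Z" "even (card T)" unfolding EV_def by auto
    have "finite T" using T(1) fZ by (rule finite_subset)
    then have "even (card (tog a b T))" using tog_even[OF _ ab(3) T(2)] by blast
    moreover have "tog a b T \<subseteq> Z" using tog_sub[OF T(1) ab(1,2)] .
    ultimately show ?thesis unfolding EV_def by simp
  qed
  have injU: "T1 \<union> {w,z} = T2 \<union> {w,z} \<longleftrightarrow> T1 = T2" if "T1 \<subseteq> Z" "T2 \<subseteq> Z" for T1 T2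
  proof
    assume eq: "T1 \<union> {w,z} = T2 \<union> {w,z}"
    have "T1 = (T1 \<union> {w,z}) - {w,z}" using that wz by auto
    also have "\<dots> = (T2 \<union> {w,z}) - {w,z}" by (simp only: eq)
    also have "\<dots> = T2" using that wz by auto
    finally show "T1 = T2" .
  qed simp
  have dA: "X \<noteq> Y" if "a \<in> X" "a \<notin> Y" for X Y :: "'a set" using that by auto
  have ce: "cycle_edges (cyc T) = {{Inl w, Inr (T \<union> {w,z})}, {Inl z, Inr (T \<union> {w,z})},
      {Inl z, Inr (tog a b T \<union> {w,z})}, {Inl w, Inr (tog a b T \<union> {w,z})}}" for T
    unfolding cyc_def by (rule ce4io)
  have aZ: "a \<noteq> w" "a \<noteq> z" using ab wz by auto
  have "decS (Pw w z Z) (cyc ` I)"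
    unfolding decS_def
  proof (intro conjI)
    show "finite (cyc ` I)" using finEV unfolding I_def by simp
    show "\<forall>c\<in>cyc ` I. 3 \<le> length c \<and> distinct c \<and> length c \<le> 6"
    proof
      fix c assume "c \<in> cyc ` I"
      then obtain T where T: "T \<in> I" "c = cyc T" by blast
      have "a \<in> tog a b T" "a \<notin> T" using T(1) unfolding I_def by (auto simp: tog_a)
      then have "T \<union> {w,z} \<noteq> tog a b T \<union> {w,z}" using aZ by (intro dA[symmetric]) auto
      then show "3 \<le> length c \<and> distinct c \<and> length c \<le> 6" using T(2) wz unfolding cyc_def by simp
    qed
    show "\<forall>c1\<in>cyc ` I. \<forall>c2\<in>cyc ` I. c1 \<noteq> c2 \<longrightarrow> cycle_edges c1 \<inter> cycle_edges c2 = {}"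
    proof (intro ballI impI)
      fix c1 c2 assume c: "c1 \<in> cyc ` I" "c2 \<in> cyc ` I" "c1 \<noteq> c2"
      then obtain T1 T2 where T: "T1 \<in> I" "T2 \<in> I" "c1 = cyc T1" "c2 = cyc T2" by blast
      then have ne: "T1 \<noteq> T2" using c(3) by blast
      have sub: "T1 \<subseteq> Z" "T2 \<subseteq> Z" "tog a b T1 \<subseteq> Z" "tog a b T2 \<subseteq> Z"
        using T(1,2) tog_sub[OF _ ab(1,2)] unfolding I_def EV_def by auto
      have a: "a \<in> tog a b T1" "a \<notin> T1" "a \<in> tog a b T2" "a \<notin> T2" using T(1,2) unfolding I_def by (auto simp: tog_a)
      have n1: "T1 \<union> {w,z} \<noteq> T2 \<union> {w,z}" using injU[OF sub(1,2)] ne by blast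
      have n2: "T1 \<union> {w,z} \<noteq> tog a b T2 \<union> {w,z}" using a aZ by (intro dA[symmetric]) auto
      have n3: "tog a b T1 \<union> {w,z} \<noteq> T2 \<union> {w,z}" using a aZ by (intro dA) auto
      have "tog a b T1 \<noteq> tog a b T2" using ne tog_tog by metis
      then have n4: "tog a b T1 \<union> {w,z} \<noteq> tog a b T2 \<union> {w,z}" using injU[OF sub(3,4)] by blast
      show "cycle_edges c1 \<inter> cycle_edges c2 = {}"
      proof (rule ccontr)
        assume "cycle_edges c1 \<inter> cycle_edges c2 \<noteq> {}"
        then obtain e where e: "e \<in> cycle_edges (cyc T1)" "e \<in> cycle_edges (cyc T2)" using T(3,4) by blast
        from ce4io_form[OF e(1)[unfolded cyc_def]] obtain y1 X1 where
          1: "X1 = T1 \<union> {w,z} \<or> X1 = tog a b T1 \<union> {w,z}" "e = {Inl y1, Inr X1}" by blast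
        from ce4io_form[OF e(2)[unfolded cyc_def]] obtain y2 X2 where
          2: "X2 = T2 \<union> {w,z} \<or> X2 = tog a b T2 \<union> {w,z}" "e = {Inl y2, Inr X2}" by blast
        have "X1 = X2" using 1(2) 2(2) edge_eq by metis
        then show False using 1(1) 2(1) n1 n2 n3 n4 by metis
      qed
    qed
    show "(\<Union>c\<in>cyc ` I. cycle_edges c) = Pw w z Z"
    proof (intro equalityI subsetI)
      fix e assume "e \<in> (\<Union>c\<in>cyc ` I. cycle_edges c)"
      then obtain T where T: "T \<in> I" "e \<in> cycle_edges (cyc T)" by blast
      have ev: "T \<in> EV Z" "tog a b T \<in> EV Z" using T(1) EVI unfolding I_def by auto
      from T(2) have "e = {Inl w, Inr (T \<union> {w,z})} \<or> e = {Inl z, Inr (T \<union> {w,z})} \<or>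
        e = {Inl z, Inr (tog a b T \<union> {w,z})} \<or> e = {Inl w, Inr (tog a b T \<union> {w,z})}"
        unfolding ce by (simp only: insert_iff empty_iff simp_thms)
      then show "e \<in> Pw w z Z"
      proof (elim disjE)
        assume "e = {Inl w, Inr (T \<union> {w,z})}" then show ?thesis using Pw_memw[OF ev(1)] by (simp only:)
      next
        assume "e = {Inl z, Inr (T \<union> {w,z})}" then show ?thesis using Pw_memz[OF ev(1)] by (simp only:)
      next
        assume "e = {Inl z, Inr (tog a b T \<union> {w,z})}" then show ?thesis using Pw_memz[OF ev(2)] by (simp only:)
      next
        assume "e = {Inl w, Inr (tog a b T \<union> {w,z})}" then show ?thesis using Pw_memw[OF ev(2)] by (simp only:)
      qed
    next
      have cov: "{Inl w, Inr (U \<union> {w,z})} \<in> (\<Union>c\<in>cyc ` I. cycle_edges c) \<and>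
                 {Inl z, Inr (U \<union> {w,z})} \<in> (\<Union>c\<in>cyc ` I. cycle_edges c)" if U: "U \<in> EV Z" for U
      proof (cases "a \<in> U")
        case False
        then have "U \<in> I" using U unfolding I_def by simp
        moreover have "{Inl w, Inr (U \<union> {w,z})} \<in> cycle_edges (cyc U)" "{Inl z, Inr (U \<union> {w,z})} \<in> cycle_edges (cyc U)"
          unfolding ce by (simp only: insert_iff simp_thms)+
        ultimately show ?thesis by blast
      next
        case True
        then have "a \<notin> tog a b U" by (simp add: tog_a)
        then have "tog a b U \<in> I" using EVI[OF U] unfolding I_def by simp
        moreover have "{Inl w, Inr (U \<union> {w,z})} \<in> cycle_edges (cyc (tog a b U))" "{Inl z, Inr (U \<union> {w,z})} \<in> cycle_edges (cyc (tog a b U))"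
          unfolding ce tog_tog by (simp only: insert_iff simp_thms)+
        ultimately show ?thesis by blast
      qed
      fix e assume e: "e \<in> Pw w z Z"
      then consider (w) "e \<in> (\<lambda>T. {Inl w, Inr (T \<union> {w,z})}) ` EV Z" | (z) "e \<in> (\<lambda>T. {Inl z, Inr (T \<union> {w,z})}) ` EV Z"
        unfolding Pw_def by (simp only: Un_iff) blast
      then show "e \<in> (\<Union>c\<in>cyc ` I. cycle_edges c)"
      proof cases
        case w then obtain U where "U \<in> EV Z" "e = {Inl w, Inr (U \<union> {w,z})}" by (rule imageE)
        then show ?thesis using cov by blast
      next
        case z then obtain U where "U \<in> EV Z" "e = {Inl z, Inr (U \<union> {w,z})}" by (rule imageE)
        then show ?thesis using cov by blast
      qed
    qed
  qed
  then show ?thesis by blast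
qed

lemma cge_insert: "comp_graph_edges (insert C \<C>) = (\<lambda>x. {Inl x, Inr C}) ` C \<union> comp_graph_edges \<C>"
  unfolding comp_graph_edges_def by blast

lemma cge_empty: "comp_graph_edges {} = {}"
  unfolding comp_graph_edges_def by blast

lemma ce6: "cycle_edges [p0, p1, p2, p3, p4, p5] = {{p0,p1},{p1,p2},{p2,p3},{p3,p4},{p4,p5},{p5,p0}}"
proof -
  have "{..<length [p0, p1, p2, p3, p4, p5]} = {0,1,2,3,4,5::nat}" by auto
  then show ?thesis unfolding cycle_edges_img by simp
qed

lemma evens3:
  assumes "a \<noteq> b" "a \<noteq> c" "b \<noteq> c"
  shows "evens {a,b,c} = {{a,b},{b,c},{a,c}}"
proof (intro equalityI subsetI)
  fix C assume "C \<in> evens {a,b,c}"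
  then have C: "C \<subseteq> {a,b,c}" "even (card C)" "2 \<le> card C" unfolding evens_def by auto
  have "card C \<le> card {a,b,c}" using C(1) by (rule card_mono[rotated]) simp
  also have "card {a,b,c} = 3" using assms by simp
  finally have "card C = 2" using C(2,3) by presburger
  then obtain x y where xy: "C = {x,y}" "x \<noteq> y" using card_2_iff by metis
  then have "x \<in> {a,b,c}" "y \<in> {a,b,c}" using C(1) by auto
  then show "C \<in> {{a,b},{b,c},{a,c}}" using xy by (auto simp: doubleton_eq_iff)
next
  fix C assume "C \<in> {{a,b},{b,c},{a,c}}"
  then show "C \<in> evens {a,b,c}" unfolding evens_def using assms by auto
qed

lemma base3:
  assumes "finite X" "card X = 3"
  shows "\<exists>S. decS (comp_graph_edges (evens X)) S"
proof -
  obtain a b c where X: "X = {a,b,c}" and d: "a \<noteq> b" "a \<noteq> c" "b \<noteq> c"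
    using assms(2) card_3_iff by metis
  define cy where "cy = [Inl a, Inr {a,b}, Inl b, Inr {b,c}, Inl c, Inr {a,c}]"
  have ne: "{a,b} \<noteq> {b,c}" "{a,b} \<noteq> {a,c}" "{b,c} \<noteq> {a,c}" using d by (auto simp: doubleton_eq_iff)
  have "decS (comp_graph_edges (evens X)) {cy}"
    unfolding decS_def
  proof (intro conjI)
    show "finite {cy}" by simp
    show "\<forall>c\<in>{cy}. 3 \<le> length c \<and> distinct c \<and> length c \<le> 6" using ne d unfolding cy_def by simp
    show "\<forall>c1\<in>{cy}. \<forall>c2\<in>{cy}. c1 \<noteq> c2 \<longrightarrow> cycle_edges c1 \<inter> cycle_edges c2 = {}" by simp
    show "(\<Union>c\<in>{cy}. cycle_edges c) = comp_graph_edges (evens X)"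
      unfolding X evens3[OF d] cge_insert cge_empty cy_def by (simp add: ce6 insert_commute)
  qed
  then show ?thesis by blast
qed

lemma Fz4:
  assumes "z \<noteq> w" "z \<noteq> a" "z \<noteq> b" "w \<noteq> a" "w \<noteq> b" "a \<noteq> b"
  shows "Fz {z,w,a,b} z = {{z,w},{z,a},{z,b},{z,w,a,b}}"
proof (intro equalityI subsetI)
  fix C assume "C \<in> Fz {z,w,a,b} z"
  then have C: "C \<subseteq> {z,w,a,b}" "even (card C)" "z \<in> C" unfolding Fz_def evens_def by auto
  have fC: "finite C" using C(1) by (rule finite_subset) simp
  have "card C \<noteq> 0" using fC C(3) by auto
  have "card C \<le> card {z,w,a,b}" using C(1) by (rule card_mono[rotated]) simp
  also have c4: "card {z,w,a,b} = 4" using assms by simp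
  finally have "card C = 2 \<or> card C = 4" using C(2) \<open>card C \<noteq> 0\<close> by presburger
  then show "C \<in> {{z,w},{z,a},{z,b},{z,w,a,b}}"
  proof
    assume "card C = 4"
    then have "C = {z,w,a,b}" using card_subset_eq[OF _ C(1)] c4 by simp
    then show ?thesis by simp
  next
    assume "card C = 2"
    then obtain x y where xy: "C = {x,y}" "x \<noteq> y" using card_2_iff by metis
    then have "x \<in> {z,w,a,b}" "y \<in> {z,w,a,b}" "x = z \<or> y = z" using C(1,3) by auto
    then show ?thesis using xy assms by (auto simp: doubleton_eq_iff)
  qed
next
  fix C assume "C \<in> {{z,w},{z,a},{z,b},{z,w,a,b}}"
  then show "C \<in> Fz {z,w,a,b} z" unfolding Fz_def evens_def using assms by auto
qed

lemma base4:
  assumes "finite X" "card X = 4" "z \<in> X"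
  shows "\<exists>S. decS (comp_graph_edges (Fz X z)) S"
proof -
  obtain w a b where X: "X = {z,w,a,b}" and d: "z \<noteq> w" "z \<noteq> a" "z \<noteq> b" "w \<noteq> a" "w \<noteq> b" "a \<noteq> b"
  proof -
    have "card (X - {z}) = 3" using assms by simp
    then obtain w a b where "X - {z} = {w,a,b}" "w \<noteq> a" "w \<noteq> b" "a \<noteq> b" using card_3_iff by metis
    moreover then have "X = {z,w,a,b}" "z \<noteq> w" "z \<noteq> a" "z \<noteq> b" using assms(3) by blast+
    ultimately show ?thesis using that by blast
  qed
  define c1 where "c1 = [Inl w, Inr {z,w}, Inl z, Inr {z,a}, Inl a, Inr {z,w,a,b}]"
  define c2 where "c2 = [Inl z, Inr {z,b}, Inl b, Inr {z,w,a,b}]"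
  have ne: "{z,w} \<noteq> {z,a}" "{z,w} \<noteq> {z,w,a,b}" "{z,a} \<noteq> {z,w,a,b}" "{z,b} \<noteq> {z,w,a,b}"
    using d by (auto simp: doubleton_eq_iff)
  have c12: "c1 \<noteq> c2" unfolding c1_def c2_def by simp
  have "decS (comp_graph_edges (Fz X z)) {c1, c2}"
    unfolding decS_def
  proof (intro conjI)
    show "finite {c1, c2}" by simp
    show "\<forall>c\<in>{c1, c2}. 3 \<le> length c \<and> distinct c \<and> length c \<le> 6" using ne d unfolding c1_def c2_def by simp
    have "cycle_edges c1 \<inter> cycle_edges c2 = {}"
      unfolding c1_def c2_def ce6 ce4 using d ne by (auto simp: doubleton_eq_iff)
    then show "\<forall>x\<in>{c1, c2}. \<forall>y\<in>{c1, c2}. x \<noteq> y \<longrightarrow> cycle_edges x \<inter> cycle_edges y = {}" by blast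
    show "(\<Union>c\<in>{c1, c2}. cycle_edges c) = comp_graph_edges (Fz X z)"
      unfolding X Fz4[OF d] cge_insert cge_empty c1_def c2_def by (simp add: ce6 ce4 insert_commute)
  qed
  then show ?thesis by blast
qed

lemma main_dec:
  "finite X \<Longrightarrow> (3 \<le> card X \<longrightarrow> (\<exists>S. decS (comp_graph_edges (evens X)) S)) \<and>
     (\<forall>z\<in>X. 4 \<le> card X \<longrightarrow> (\<exists>S. decS (comp_graph_edges (Fz X z)) S))"
proof (induction "card X" arbitrary: X rule: less_induct)
  case less
  have Fpart: "\<exists>S. decS (comp_graph_edges (Fz X z)) S" if z: "z \<in> X" and c4: "4 \<le> card X" for z
  proof (cases "card X = 4")
    case True
    show ?thesis by (rule base4[OF less.prems True z])
  next
    case False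
    then have c5: "5 \<le> card X" using c4 by simp
    obtain w where w: "w \<in> X" "w \<noteq> z"
    proof -
      have "card (X - {z}) \<ge> 1" using c5 z less.prems by simp
      then have "X - {z} \<noteq> {}" by (metis card.empty not_one_le_zero)
      then show ?thesis using that by blast
    qed
    define Z where "Z = X - {w,z}"
    have fZ: "finite Z" unfolding Z_def using less.prems by simp
    have cZ: "card Z = card X - 2" unfolding Z_def using w z less.prems
      by (simp add: card_Diff_subset)
    have wzZ: "w \<notin> Z" "z \<notin> Z" unfolding Z_def by auto
    obtain a b where ab: "a \<in> Z" "b \<in> Z" "a \<noteq> b"
    proof -
      have "2 \<le> card Z" using cZ c5 by simp
      then obtain B where "B \<subseteq> Z" "card B = 2" using obtain_subset_with_card_n by metis
      then obtain a b where "B = {a,b}" "a \<noteq> b" using card_2_iff by metis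
      then show ?thesis using that \<open>B \<subseteq> Z\<close> by blast
    qed
    have XZ: "X - {w} - {w, z} = Z" unfolding Z_def by auto
    have X': "X - {w,z} = Z" unfolding Z_def by simp
    have IH1: "\<exists>S. decS (comp_graph_edges (Fz (X - {w}) z)) S"
    proof -
      have "card (X - {w}) < card X" by (rule card_Diff1_less[OF less.prems w(1)])
      moreover have "4 \<le> card (X - {w})" using w less.prems c5 by simp
      ultimately show ?thesis using less.hyps[of "X - {w}"] less.prems z w by simp
    qed
    have IH2: "\<exists>S. decS (comp_graph_edges (evens Z)) S"
    proof -
      have "card Z < card X" using cZ c5 by simp
      moreover have "3 \<le> card Z" using cZ c5 by simp
      ultimately show ?thesis using less.hyps[of Z] fZ by simp
    qed
    then obtain S2 where S2: "decS (comp_graph_edges (evens Z)) S2" by blast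
    have P2: "decS ((`) (psi w z) ` comp_graph_edges (evens Z)) (map (psi w z) ` S2)"
      using decS_image[OF S2 psi_inj[OF wzZ]] .
    obtain S3 where S3: "decS (Pw w z Z) S3" using Pw_dec[OF fZ w(2) wzZ ab] by blast
    obtain S1 where S1: "decS (comp_graph_edges (Fz (X - {w}) z)) S1" using IH1 by blast
    have W: "decS (comp_graph_edges ((\<lambda>T. T \<union> {w,z}) ` EV Z)) (map (psi w z) ` S2 \<union> S3)"
      unfolding cge_W(1)[OF fZ w(2) wzZ] using decS_Un[OF P2 S3 cge_W(2)[OF fZ w(2) wzZ]] .
    have spl: "Fz X z = Fz (X - {w}) z \<union> (\<lambda>T. T \<union> {w,z}) ` EV Z"
      "Fz (X - {w}) z \<inter> (\<lambda>T. T \<union> {w,z}) ` EV Z = {}"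
      using Fz_split[OF less.prems w(2) w(1) z] unfolding X' by blast+
    have "decS (comp_graph_edges (Fz X z)) (S1 \<union> (map (psi w z) ` S2 \<union> S3))"
      unfolding spl(1) cge_Un using decS_Un[OF S1 W cge_disj[OF spl(2)]] .
    then show ?thesis by blast
  qed
  have Epart: "\<exists>S. decS (comp_graph_edges (evens X)) S" if c3: "3 \<le> card X"
  proof (cases "card X = 3")
    case True
    show ?thesis by (rule base3[OF less.prems True])
  next
    case False
    then have c4: "4 \<le> card X" using c3 by simp
    obtain z where z: "z \<in> X" using c4 by fastforce
    have "card (X - {z}) < card X" by (rule card_Diff1_less[OF less.prems z])
    moreover have "3 \<le> card (X - {z})" using z less.prems c4 by simp
    ultimately obtain S1 where S1: "decS (comp_graph_edges (evens (X - {z}))) S1"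
      using less.hyps[of "X - {z}"] less.prems by auto
    obtain S2 where S2: "decS (comp_graph_edges (Fz X z)) S2" using Fpart[OF z c4] by blast
    have "decS (comp_graph_edges (evens X)) (S1 \<union> S2)"
      unfolding evens_split(1)[of X z] cge_Un using decS_Un[OF S1 S2 cge_disj[OF evens_split(2)]] .
    then show ?thesis by blast
  qed
  show ?case using Fpart Epart by blast
qed

lemma total_size_card:
  assumes "finite \<C>" "\<forall>C\<in>\<C>. finite C"
  shows "total_size \<C> = card (comp_graph_edges \<C>)"
proof -
  let ?f = "\<lambda>(C, x). {Inl x, Inr C} :: ('a + 'a set) set"
  have img: "comp_graph_edges \<C> = ?f ` (SIGMA C:\<C>. C)"
    unfolding comp_graph_edges_def by auto
  have inj: "inj_on ?f (SIGMA C:\<C>. C)"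
    by (rule inj_onI) (auto simp: edge_eq)
  have "card (comp_graph_edges \<C>) = card (SIGMA C:\<C>. C)"
    unfolding img by (rule card_image[OF inj])
  also have "\<dots> = (\<Sum>C\<in>\<C>. card C)" using assms by simp
  finally show ?thesis unfolding total_size_def by simp
qed

lemma log_bound:
  assumes "3 \<le> n"
  shows "(6::real) \<le> 5 * log 2 (real n)"
proof -
  have "log 2 (2 ^ 6) \<le> log 2 (3 ^ 5)" by simp
  then have "6 * log 2 2 \<le> 5 * log 2 (3::real)" by (simp only: log_nat_power)
  then have "6 \<le> 5 * log 2 (3::real)" by simp
  also have "log 2 3 \<le> log 2 (real n)" using assms by simp
  finally show ?thesis by simp
qed

theorem corollary2:
  fixes X :: "'a set" and n :: nat
  assumes "finite X" and "card X = n" and "n \<ge> 3"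
  defines "\<C> \<equiv> {C. C \<subseteq> X \<and> even (card C) \<and> card C \<ge> 2}"
  shows "\<exists>\<sigma>. cycle_decomposition (comp_graph_edges \<C>) \<sigma> \<and>
             mu_dec (total_size \<C>) \<sigma> \<le> 5 * log 2 (real n) \<and>
             alpha_dec (total_size \<C>) \<sigma> \<le> 5 * log 2 (real n)"
proof -
  have CE: "\<C> = evens X" unfolding \<C>_def evens_def by simp
  obtain S where S: "decS (comp_graph_edges \<C>) S"
    using main_dec[OF assms(1)] assms(2,3) unfolding CE by blast
  obtain \<sigma> where \<sigma>: "cycle_decomposition (comp_graph_edges \<C>) \<sigma>" "\<forall>c\<in>set \<sigma>. card (cycle_edges c) \<le> 6"
    using decS_list[OF S] by blast
  define c where "c i = card (cycle_edges (\<sigma> ! i))" for i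
  define L where "L = length \<sigma>"
  have c6: "c i \<le> 6" if "i < L" for i using \<sigma>(2) that unfolding c_def L_def by simp
  have finC: "finite \<C>" unfolding CE evens_def using assms(1) by simp
  have finCs: "\<forall>C\<in>\<C>. finite C" unfolding CE evens_def using assms(1) finite_subset by blast
  have U: "comp_graph_edges \<C> = (\<Union>i\<in>{..<L}. cycle_edges (\<sigma> ! i))"
  proof -
    have "(\<Union>c\<in>set \<sigma>. cycle_edges c) = comp_graph_edges \<C>" using \<sigma>(1) unfolding cycle_decomposition_def by blast
    moreover have "set \<sigma> = (\<lambda>i. \<sigma> ! i) ` {..<L}" unfolding L_def by (auto simp: in_set_conv_nth)
    ultimately show ?thesis by simp
  qed
  have disj: "\<forall>i\<in>{..<L}. \<forall>j\<in>{..<L}. i \<noteq> j \<longrightarrow> cycle_edges (\<sigma> ! i) \<inter> cycle_edges (\<sigma> ! j) = {}"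
    using \<sigma>(1) unfolding cycle_decomposition_def L_def by auto
  have d: "total_size \<C> = (\<Sum>i<L. c i)"
    unfolding total_size_card[OF finC finCs] U c_def
    by (rule card_UN_disjoint) (auto simp: finite_cycle_edges disj)
  have lb: "(6::real) \<le> 5 * log 2 (real n)" using log_bound assms(3) by simp
  have mu: "mu_dec (total_size \<C>) \<sigma> \<le> 6"
  proof (cases "L = 0")
    case True then show ?thesis unfolding mu_dec_def L_def by simp
  next
    case False
    have "(\<Sum>i<L. c i) \<le> (\<Sum>i<L. 6)" by (rule sum_mono) (simp add: c6)
    then have "total_size \<C> \<le> 6 * L" unfolding d by simp
    then have "real (total_size \<C>) \<le> real (6 * L)" by (simp only: of_nat_le_iff)
    then have "real (total_size \<C>) \<le> 6 * real L" by simp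
    then show ?thesis unfolding mu_dec_def L_def[symmetric] using False by (simp add: divide_le_eq)
  qed
  have al: "alpha_dec (total_size \<C>) \<sigma> \<le> 6"
  proof (cases "total_size \<C> = 0")
    case True then show ?thesis unfolding alpha_dec_def by simp
  next
    case False
    have "(\<Sum>i<L. real (c i) ^ 2) \<le> (\<Sum>i<L. 6 * real (c i))"
    proof (rule sum_mono)
      fix i assume "i \<in> {..<L}"
      then have "real (c i) \<le> 6" using c6 by simp
      then show "real (c i) ^ 2 \<le> 6 * real (c i)" by (simp add: power2_eq_square mult_right_mono)
    qed
    also have "\<dots> = 6 * real (total_size \<C>)" unfolding d by (simp add: sum_distrib_left)
    finally have "(\<Sum>i<L. real (c i) ^ 2) \<le> 6 * real (total_size \<C>)" .
    then show ?thesis unfolding alpha_dec_def c_def[symmetric] L_def[symmetric] using False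
      by (simp add: divide_le_eq)
  qed
  show ?thesis using \<sigma>(1) mu al lb by (meson order_trans)
qed

end
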